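(* Let $q>0$ be transcendental, or $q\ge4$. Then for every real number $a$ there is at most one proper path $\mathbf m$ for $q$ with $c(q,\mathbf m)=a$. In particular, the weight $w_q$ is unique.
   Context: Let $q>0$. For an integer $k\ge0$ and $\mathbf m=(m_0,\dots,m_k)\in\mathbb Z^{k+1}$ put $\mathbf m_j=(m_0,\dots,m_j)$, $0\le j\le k$. Define $c(q,\mathbf m_0)=m_0$ and recursively $c(q,\mathbf m_j)=m_j+\frac{1}{q\,c(q,\mathbf m_{j-1})}$ for $1\le j\le k$, so that $c(q,\mathbf m)=m_k+\cfrac{1}{qm_{k-1}+\cfrac{q}{\ddots+\cfrac{q}{qm_0}}}$. The vector $\mathbf m$ is a path for $q$ (of length $k$) if $c(q,\mathbf m_j)\ne0$ for $0\le j\le k-1$ (all denominators nonzero). A path is proper if $m_j\ne0$ for all $0\le j\le k-1$. The weight of a path is $w_q(\mathbf m)=q^{k/2}\prod_{j=0}^{k-1}|c(q,\mathbf m_j)|$ (and $w_q(\mathbf m)=1$ if $k=0$). The weight $w_q$ is called unique if $w_q(\mathbf m)=w_q(\mathbf n)$ for all paths $\mathbf m,\mathbf n$ for $q$ with $c(q,\mathbf m)=c(q,\mathbf n)$. *)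

theory Defs
  imports Complex_Main "HOL-Computational_Algebra.Polynomial"
begin

text \<open>A vector m = (m_0,...,m_k) in Z^(k+1) is represented as an int list of length k+1.
  cval q m j is c(q, m_j), where m is accessed through its index function.\<close>

fun cval :: "real \<Rightarrow> (nat \<Rightarrow> int) \<Rightarrow> nat \<Rightarrow> real" where
  "cval q m 0 = of_int (m 0)"
| "cval q m (Suc j) = of_int (m (Suc j)) + 1 / (q * cval q m j)"

definition cfrac :: "real \<Rightarrow> int list \<Rightarrow> real" where
  "cfrac q ms = cval q (\<lambda>j. ms ! j) (length ms - 1)"

definition is_path :: "real \<Rightarrow> int list \<Rightarrow> bool" where
  "is_path q ms \<longleftrightarrow> ms \<noteq> [] \<and> (\<forall>j < length ms - 1. cval q (\<lambda>i. ms ! i) j \<noteq> 0)"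

definition proper_path :: "real \<Rightarrow> int list \<Rightarrow> bool" where
  "proper_path q ms \<longleftrightarrow> is_path q ms \<and> (\<forall>j < length ms - 1. ms ! j \<noteq> 0)"

definition weight :: "real \<Rightarrow> int list \<Rightarrow> real" where
  "weight q ms = q powr (real (length ms - 1) / 2) *
     (\<Prod>j < length ms - 1. \<bar>cval q (\<lambda>i. ms ! i) j\<bar>)"

definition weight_unique :: "real \<Rightarrow> bool" where
  "weight_unique q \<longleftrightarrow> (\<forall>ms ns. is_path q ms \<and> is_path q ns \<and> cfrac q ms = cfrac q ns
       \<longrightarrow> weight q ms = weight q ns)"

end

theory Submission
  imports Defs
begin

lemma cval_cong: "(\<And>i. i \<le> j \<Longrightarrow> m i = m' i) \<Longrightarrow> cval q m j = cval q m' j"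
  by (induction j) auto

lemma cfrac_single[simp]: "cfrac q [x] = of_int x" by (simp add: cfrac_def)

lemma cfrac_snoc:
  assumes "xs \<noteq> []" shows "cfrac q (xs @ [x]) = of_int x + 1/(q * cfrac q xs)"
proof -
  obtain n where n: "length xs = Suc n" using assms by (cases xs) auto
  have "cfrac q (xs@[x]) = cval q (\<lambda>j. (xs@[x])!j) (Suc n)" by (simp add: cfrac_def n)
  also have "\<dots> = of_int x + 1/(q * cval q (\<lambda>j. (xs@[x])!j) n)" using n by (simp add: nth_append)
  also have "cval q (\<lambda>j. (xs@[x])!j) n = cval q (\<lambda>j. xs!j) n" by (rule cval_cong) (simp add: nth_append n)
  finally show ?thesis by (simp add: cfrac_def n)
qed

lemma is_path_single[simp]: "is_path q [x]" by (simp add: is_path_def)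
lemma is_path_Nil[simp]: "\<not> is_path q []" by (simp add: is_path_def)

lemma is_path_snoc:
  assumes "xs \<noteq> []" shows "is_path q (xs@[x]) \<longleftrightarrow> is_path q xs \<and> cfrac q xs \<noteq> 0"
proof -
  obtain n where n: "length xs = Suc n" using assms by (cases xs) auto
  have eq: "j < length xs \<Longrightarrow> cval q (\<lambda>i. (xs@[x])!i) j = cval q (\<lambda>i. xs!i) j" for j
    by (rule cval_cong) (simp add: nth_append)
  have "is_path q (xs@[x]) \<longleftrightarrow> (\<forall>j<Suc n. cval q (\<lambda>i. xs!i) j \<noteq> 0)" using eq n assms by (auto simp: is_path_def)
  also have "\<dots> \<longleftrightarrow> (\<forall>j<n. cval q (\<lambda>i. xs!i) j \<noteq> 0) \<and> cval q (\<lambda>i. xs!i) n \<noteq> 0" by (auto simp: less_Suc_eq)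
  also have "\<dots> \<longleftrightarrow> is_path q xs \<and> cfrac q xs \<noteq> 0" using assms n by (simp add: is_path_def cfrac_def)
  finally show ?thesis .
qed

lemma weight_single[simp]: "q > 0 \<Longrightarrow> weight q [x] = 1" by (simp add: weight_def)

lemma weight_snoc:
  assumes "xs \<noteq> []" "q > 0" shows "weight q (xs@[x]) = weight q xs * sqrt q * \<bar>cfrac q xs\<bar>"
proof -
  obtain n where n: "length xs = Suc n" using assms by (cases xs) auto
  have eq: "j < length xs \<Longrightarrow> cval q (\<lambda>i. (xs@[x])!i) j = cval q (\<lambda>i. xs!i) j" for j
    by (rule cval_cong) (simp add: nth_append)
  have p: "(\<Prod>j<Suc n. \<bar>cval q (\<lambda>i. (xs@[x])!i) j\<bar>) = (\<Prod>j<Suc n. \<bar>cval q (\<lambda>i. xs!i) j\<bar>)"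
    by (rule prod.cong) (auto simp: eq n)
  have "weight q (xs@[x]) = q powr (real (Suc n)/2) * (\<Prod>j<Suc n. \<bar>cval q (\<lambda>i. xs!i) j\<bar>)"
    unfolding weight_def using n p by simp
  also have "\<dots> = (q powr (real n/2) * (\<Prod>j<n. \<bar>cval q (\<lambda>i. xs!i) j\<bar>)) * q powr (1/2) * \<bar>cval q (\<lambda>i. xs!i) n\<bar>"
    by (simp add: powr_add[symmetric] add_divide_distrib add.commute)
  also have "\<dots> = weight q xs * sqrt q * \<bar>cfrac q xs\<bar>"
    using assms n by (simp add: weight_def cfrac_def powr_half_sqrt)
  finally show ?thesis .
qed


lemma elim_cfrac:
  assumes "q > 0" shows "cfrac q (as@[a,0,b]@cs) = cfrac q (as@[a+b]@cs)"
proof (induction cs rule: rev_induct)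
  case Nil
  have 1: "as@[a,0,b]@[] = ((as@[a])@[0])@[b]" by simp
  have c1: "cfrac q (((as@[a])@[0])@[b]) = of_int b + 1/(q * cfrac q ((as@[a])@[0]))" by (rule cfrac_snoc) simp
  have c2: "cfrac q ((as@[a])@[0]) = 0 + 1/(q * cfrac q (as@[a]))" by (subst cfrac_snoc) simp_all
  have "cfrac q (as@[a,0,b]@[]) = of_int b + cfrac q (as@[a])"
    unfolding 1 c1 c2 using assms by simp
  also have "\<dots> = cfrac q (as@[a+b]@[])"
    by (cases "as = []") (simp_all add: cfrac_snoc)
  finally show ?case .
next
  case (snoc c cs)
  have 1: "as@[a,0,b]@(cs@[c]) = (as@[a,0,b]@cs)@[c]" "as@[a+b]@(cs@[c]) = (as@[a+b]@cs)@[c]" by simp_all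
  have e1: "cfrac q ((as@[a,0,b]@cs)@[c]) = of_int c + 1/(q*cfrac q (as@[a,0,b]@cs))" by (rule cfrac_snoc) simp
  have e2: "cfrac q ((as@[a+b]@cs)@[c]) = of_int c + 1/(q*cfrac q (as@[a+b]@cs))" by (rule cfrac_snoc) simp
  show ?case unfolding 1 e1 e2 snoc.IH ..
qed

lemma elim_weight:
  assumes "q > 0" "cfrac q (as@[a]) \<noteq> 0" shows "weight q (as@[a,0,b]@cs) = weight q (as@[a+b]@cs)"
proof (induction cs rule: rev_induct)
  case Nil
  have 1: "as@[a,0,b]@[] = ((as@[a])@[0])@[b]" by simp
  have sq: "sqrt q * sqrt q = q" using assms by simp
  have c2: "cfrac q ((as@[a])@[0]) = 0 + 1/(q * cfrac q (as@[a]))" by (subst cfrac_snoc) simp_all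
  have w1: "weight q (((as@[a])@[0])@[b]) = weight q ((as@[a])@[0]) * sqrt q * \<bar>cfrac q ((as@[a])@[0])\<bar>"
    using assms by (subst weight_snoc) simp_all
  have w2: "weight q ((as@[a])@[0]) = weight q (as@[a]) * sqrt q * \<bar>cfrac q (as@[a])\<bar>"
    using assms by (subst weight_snoc) simp_all
  have "weight q (as@[a,0,b]@[]) = weight q (as@[a]) * (sqrt q * sqrt q) * \<bar>cfrac q (as@[a])\<bar> * \<bar>1/(q * cfrac q (as@[a]))\<bar>"
    unfolding 1 w1 w2 c2 by simp
  also have "\<dots> = weight q (as@[a])" unfolding sq using assms by (simp add: abs_mult)
  also have "\<dots> = weight q (as@[a+b]@[])"
    using assms by (cases "as = []") (simp_all add: weight_snoc)
  finally show ?case .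
next
  case (snoc c cs)
  have 1: "as@[a,0,b]@(cs@[c]) = (as@[a,0,b]@cs)@[c]" "as@[a+b]@(cs@[c]) = (as@[a+b]@cs)@[c]" by simp_all
  have e1: "weight q ((as@[a,0,b]@cs)@[c]) = weight q (as@[a,0,b]@cs) * sqrt q * \<bar>cfrac q (as@[a,0,b]@cs)\<bar>"
    using assms by (intro weight_snoc) simp_all
  have e2: "weight q ((as@[a+b]@cs)@[c]) = weight q (as@[a+b]@cs) * sqrt q * \<bar>cfrac q (as@[a+b]@cs)\<bar>"
    using assms by (intro weight_snoc) simp_all
  show ?case unfolding 1 e1 e2 snoc.IH elim_cfrac[OF assms(1)] ..
qed

lemma elim_path:
  assumes "q > 0" "is_path q (as@[a,0,b]@cs)" shows "is_path q (as@[a+b]@cs)"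
  using assms(2)
proof (induction cs rule: rev_induct)
  case Nil
  have 1: "as@[a,0,b]@[] = ((as@[a])@[0])@[b]" by simp
  have c2: "cfrac q ((as@[a])@[0]) = 0 + 1/(q * cfrac q (as@[a]))" by (subst cfrac_snoc) simp_all
  have p1: "is_path q (((as@[a])@[0])@[b]) \<longleftrightarrow> is_path q ((as@[a])@[0]) \<and> cfrac q ((as@[a])@[0]) \<noteq> 0"
    by (rule is_path_snoc) simp
  have p2: "is_path q ((as@[a])@[0]) \<longleftrightarrow> is_path q (as@[a]) \<and> cfrac q (as@[a]) \<noteq> 0"
    by (rule is_path_snoc) simp
  have "is_path q (as@[a]) \<and> cfrac q (as@[a]) \<noteq> 0"
    using Nil.prems unfolding 1 p1 p2 by simp
  then show ?case
    by (cases "as = []") (simp_all add: is_path_snoc)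
next
  case (snoc c cs)
  have 1: "as@[a,0,b]@(cs@[c]) = (as@[a,0,b]@cs)@[c]" "as@[a+b]@(cs@[c]) = (as@[a+b]@cs)@[c]" by simp_all
  have e1: "is_path q ((as@[a,0,b]@cs)@[c]) \<longleftrightarrow> is_path q (as@[a,0,b]@cs) \<and> cfrac q (as@[a,0,b]@cs) \<noteq> 0"
    by (rule is_path_snoc) simp
  have e2: "is_path q ((as@[a+b]@cs)@[c]) \<longleftrightarrow> is_path q (as@[a+b]@cs) \<and> cfrac q (as@[a+b]@cs) \<noteq> 0"
    by (rule is_path_snoc) simp
  show ?case using snoc.prems snoc.IH unfolding 1 e1 e2 elim_cfrac[OF assms(1)] by blast
qed

lemma path_prefix:
  assumes "is_path q (L@M)" "M \<noteq> []" "L \<noteq> []" shows "is_path q L \<and> cfrac q L \<noteq> 0"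
  using assms
proof (induction M rule: rev_induct)
  case Nil then show ?case by simp
next
  case (snoc y M)
  then have "is_path q (L@M) \<and> cfrac q (L@M) \<noteq> 0"
    using is_path_snoc[of "L@M" q y] by simp
  then show ?case using snoc by (cases "M = []") auto
qed


lemma reduce:
  assumes "q > 0" "is_path q ms"
  shows "\<exists>ns. proper_path q ns \<and> cfrac q ns = cfrac q ms \<and> weight q ns = weight q ms"
  using assms(2)
proof (induction "length ms" arbitrary: ms rule: less_induct)
  case less
  show ?case
  proof (cases "proper_path q ms")
    case True thus ?thesis by blast
  next
    case False
    then obtain j where j: "j < length ms - 1" "ms!j = 0" using less.prems by (auto simp: proper_path_def)
    have "j \<noteq> 0"
    proof
      assume "j = 0"
      then have "cval q (\<lambda>i. ms!i) 0 = 0" using j by simp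
      then show False using less.prems j \<open>j = 0\<close> unfolding is_path_def by blast
    qed
    then obtain i where i: "j = Suc i" by (cases j) auto
    define as where "as = take i ms"
    define a where "a = ms!i"
    define b where "b = ms!(Suc (Suc i))"
    define cs where "cs = drop (Suc (Suc (Suc i))) ms"
    have ms: "ms = as@[a,0,b]@cs"
    proof -
      have l: "Suc (Suc i) < length ms" using j i by simp
      have "ms = take i ms @ drop i ms" by simp
      also have "drop i ms = ms!i # ms!(Suc i) # ms!(Suc (Suc i)) # drop (Suc (Suc (Suc i))) ms"
        using l by (simp add: Cons_nth_drop_Suc)
      finally show ?thesis using j i unfolding as_def a_def b_def cs_def by simp
    qed
    have p: "is_path q (as@[a,0,b]@cs)" using less.prems ms by simp
    have nz: "cfrac q (as@[a]) \<noteq> 0"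
      using path_prefix[of q "as@[a]" "[0,b]@cs"] p by simp
    have p': "is_path q (as@[a+b]@cs)" by (rule elim_path[OF assms(1) p])
    have "length (as@[a+b]@cs) < length ms" using ms by simp
    from less.hyps[OF this p'] obtain ns where
      "proper_path q ns" "cfrac q ns = cfrac q (as@[a+b]@cs)" "weight q ns = weight q (as@[a+b]@cs)" by blast
    then show ?thesis using ms elim_cfrac[OF assms(1)] elim_weight[OF assms(1) nz] by metis
  qed
qed

lemma frac_small:
  fixes q c :: real
  assumes "q \<ge> 4" "\<bar>c\<bar> > 1/2" shows "\<bar>1/(q*c)\<bar> < 1/2" "1/(q*c) \<noteq> 0"
proof -
  have "\<bar>q*c\<bar> > 2"
  proof -
    have "\<bar>q*c\<bar> = q * \<bar>c\<bar>" using assms by (simp add: abs_mult)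
    also have "\<dots> \<ge> 4 * \<bar>c\<bar>" using assms by (intro mult_right_mono) auto
    finally show ?thesis using assms by linarith
  qed
  then have "1/\<bar>q*c\<bar> < 1/2" by (intro divide_strict_left_mono) auto
  then show "\<bar>1/(q*c)\<bar> < 1/2" by (simp add: abs_divide)
  show "1/(q*c) \<noteq> 0" using assms by auto
qed

lemma big:
  assumes "q \<ge> 4" shows "xs \<noteq> [] \<Longrightarrow> (\<forall>y\<in>set xs. y \<noteq> 0) \<Longrightarrow> \<bar>cfrac q xs\<bar> > 1/2"
proof (induction xs rule: rev_induct)
  case Nil then show ?case by simp
next
  case (snoc y ys)
  have "y \<noteq> 0" using snoc.prems by simp
  then have "\<bar>y\<bar> \<ge> 1" by linarith
  then have y: "\<bar>real_of_int y\<bar> \<ge> 1" by linarith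
  show ?case
  proof (cases "ys = []")
    case True then show ?thesis using y by simp
  next
    case False
    then have t: "\<bar>1/(q*cfrac q ys)\<bar> < 1/2" using snoc frac_small[OF assms] by simp
    have "cfrac q (ys@[y]) = real_of_int y + 1/(q*cfrac q ys)" using False by (simp add: cfrac_snoc)
    then show ?thesis using y t by arith
  qed
qed

lemma uniq4:
  assumes "q \<ge> 4"
  shows "ms \<noteq> [] \<Longrightarrow> ns \<noteq> [] \<Longrightarrow> (\<forall>y\<in>set (butlast ms). y \<noteq> 0) \<Longrightarrow> (\<forall>y\<in>set (butlast ns). y \<noteq> 0)
    \<Longrightarrow> cfrac q ms = cfrac q ns \<Longrightarrow> ms = ns"
proof (induction ms arbitrary: ns rule: rev_induct)
  case Nil then show ?case by simp
next
  case (snoc x xs)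
  obtain ys y where ns: "ns = ys @ [y]" using snoc.prems by (cases ns rule: rev_cases) auto
  define tm where "tm = cfrac q (xs@[x]) - x"
  define tn where "tn = cfrac q (ys@[y]) - y"
  have tm: "(xs = [] \<longrightarrow> tm = 0) \<and> (xs \<noteq> [] \<longrightarrow> tm = 1/(q*cfrac q xs) \<and> \<bar>tm\<bar> < 1/2 \<and> tm \<noteq> 0)"
    using snoc.prems(3) big[OF assms, of xs] frac_small[OF assms] unfolding tm_def by (auto simp: cfrac_snoc)
  have tn: "(ys = [] \<longrightarrow> tn = 0) \<and> (ys \<noteq> [] \<longrightarrow> tn = 1/(q*cfrac q ys) \<and> \<bar>tn\<bar> < 1/2 \<and> tn \<noteq> 0)"
    using snoc.prems(4) big[OF assms, of ys] frac_small[OF assms] unfolding tn_def ns by (auto simp: cfrac_snoc)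
  have d: "real_of_int (x - y) = tn - tm" using snoc.prems(5) ns unfolding tm_def tn_def by simp
  have "\<bar>tm\<bar> < 1/2" using tm by (cases "xs = []") auto
  moreover have "\<bar>tn\<bar> < 1/2" using tn by (cases "ys = []") auto
  ultimately have "\<bar>tn - tm\<bar> < 1" by arith
  then have "\<bar>x - y\<bar> < 1" using d by linarith
  then have xy: "x = y" by simp
  then have tmn: "tm = tn" using d by simp
  show ?case
  proof (cases "xs = []")
    case True
    then have "ys = []" using tm tn tmn by auto
    then show ?thesis using True ns xy by simp
  next
    case False
    then have "ys \<noteq> []" using tm tn tmn by auto
    then have "1/(q*cfrac q xs) = 1/(q*cfrac q ys)" using False tm tn tmn by metis
    then have "cfrac q xs = cfrac q ys" using assms by (simp del: divide_eq_1_iff one_divide_eq_0_iff)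
    then have "xs = ys" using snoc.IH[of ys] False \<open>ys \<noteq> []\<close> snoc.prems ns
      by (simp add: in_set_butlastD)
    then show ?thesis using ns xy by simp
  qed
qed


lemma proper_nz:
  assumes "proper_path q ms" shows "ms \<noteq> [] \<and> (\<forall>y\<in>set (butlast ms). y \<noteq> 0)"
proof -
  have ne: "ms \<noteq> []" using assms by (simp add: proper_path_def is_path_def)
  have "y \<noteq> 0" if yin: "y \<in> set (butlast ms)" for y
  proof -
    obtain j where "j < length (butlast ms)" "butlast ms ! j = y" using yin unfolding in_set_conv_nth by blast
    then show ?thesis using assms by (auto simp: proper_path_def nth_butlast)
  qed
  then show ?thesis using ne by blast
qed

lemma path4:
  assumes "q \<ge> 4" shows "xs \<noteq> [] \<Longrightarrow> (\<forall>y\<in>set (butlast xs). y \<noteq> 0) \<Longrightarrow> is_path q xs"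
proof (induction xs rule: rev_induct)
  case Nil then show ?case by simp
next
  case (snoc y ys)
  show ?case
  proof (cases "ys = []")
    case True then show ?thesis by simp
  next
    case False
    have "is_path q ys" using snoc False by (simp add: in_set_butlastD)
    moreover have "cfrac q ys \<noteq> 0" using big[OF assms, of ys] snoc.prems False by fastforce
    ultimately show ?thesis using False by (simp add: is_path_snoc)
  qed
qed

fun NDr :: "int list \<Rightarrow> real poly \<times> real poly" where
  "NDr [] = (0, 1)"
| "NDr [x] = ([:of_int x:], 1)"
| "NDr (x # y # xs) = (let P = NDr (y # xs) in
     (smult (of_int x) (pCons 0 (fst P)) + snd P, pCons 0 (fst P)))"

lemma coeff_pCons0: "coeff (pCons 0 p) i = (case i of 0 \<Rightarrow> 0 | Suc n \<Rightarrow> coeff p n)"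
  by (cases i) auto

lemma NDr_int: "(\<forall>i. coeff (fst (NDr l)) i \<in> \<int>) \<and> (\<forall>i. coeff (snd (NDr l)) i \<in> \<int>)"
proof (induction l rule: NDr.induct)
  case 1 then show ?case by (simp add: coeff_1)
next
  case (2 x) then show ?case by (simp add: coeff_1 coeff_pCons split: nat.split)
next
  case (3 x y xs) then show ?case by (auto simp: Let_def coeff_pCons0 split: nat.split)
qed

lemma NDr_snoc: "xs \<noteq> [] \<Longrightarrow> NDr (rev (xs@[x])) = (let P = NDr (rev xs) in
     (smult (of_int x) (pCons 0 (fst P)) + snd P, pCons 0 (fst P)))"
  by (cases "rev xs") auto

lemma NDr_eval:
  assumes "q > 0" shows "is_path q ms \<Longrightarrow> poly (snd (NDr (rev ms))) q \<noteq> 0 \<and>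
     cfrac q ms = poly (fst (NDr (rev ms))) q / poly (snd (NDr (rev ms))) q"
proof (induction ms rule: rev_induct)
  case Nil then show ?case by simp
next
  case (snoc x xs)
  show ?case
  proof (cases "xs = []")
    case True then show ?thesis by simp
  next
    case False
    define N where "N = poly (fst (NDr (rev xs))) q"
    define D where "D = poly (snd (NDr (rev xs))) q"
    have h: "is_path q xs" "cfrac q xs \<noteq> 0" using snoc.prems False by (simp_all add: is_path_snoc)
    then have D: "D \<noteq> 0" "cfrac q xs = N / D" using snoc.IH unfolding N_def D_def by auto
    then have N: "N \<noteq> 0" using h by auto
    have e: "NDr (rev (xs@[x])) = (smult (of_int x) (pCons 0 (fst (NDr (rev xs)))) + snd (NDr (rev xs)), pCons 0 (fst (NDr (rev xs))))"
      using NDr_snoc[OF False] by (simp add: Let_def)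
    have "cfrac q (xs@[x]) = of_int x + D/(q*N)" using False D by (simp add: cfrac_snoc)
    also have "\<dots> = (of_int x * (q*N) + D)/(q*N)" using N assms by (simp add: field_simps)
    finally show ?thesis unfolding e using N assms by (simp add: N_def[symmetric] D_def[symmetric] algebra_simps)
  qed
qed


lemma uniq_trans:
  assumes q: "q > 0" "\<not> algebraic q" and pm: "proper_path q ms" and pn: "proper_path q ns"
    and eq: "cfrac q ms = cfrac q ns"
  shows "ms = ns"
proof -
  define Nm where "Nm = fst (NDr (rev ms))"
  define Dm where "Dm = snd (NDr (rev ms))"
  define Nn where "Nn = fst (NDr (rev ns))"
  define Dn where "Dn = snd (NDr (rev ns))"
  define P where "P = Nm * Dn - Nn * Dm"
  have ipm: "is_path q ms" using pm by (simp add: proper_path_def)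
  have ipn: "is_path q ns" using pn by (simp add: proper_path_def)
  have em: "poly Dm q \<noteq> 0" "cfrac q ms = poly Nm q / poly Dm q"
    using NDr_eval[OF q(1) ipm] unfolding Nm_def Dm_def by auto
  have en: "poly Dn q \<noteq> 0" "cfrac q ns = poly Nn q / poly Dn q"
    using NDr_eval[OF q(1) ipn] unfolding Nn_def Dn_def by auto
  have "poly P q = 0" using em en eq unfolding P_def by (simp add: field_simps)
  moreover have "\<forall>i. coeff P i \<in> \<int>"
    using NDr_int[of "rev ms"] NDr_int[of "rev ns"] unfolding P_def Nm_def Dm_def Nn_def Dn_def
    by (auto simp: coeff_mult intro!: Ints_diff Ints_sum Ints_mult)
  ultimately have P0: "P = 0" using q(2) algebraicI[of P q] by blast
  have nzm: "ms \<noteq> []" "\<forall>y\<in>set (butlast ms). y \<noteq> 0" using proper_nz[OF pm] by auto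
  have nzn: "ns \<noteq> []" "\<forall>y\<in>set (butlast ns). y \<noteq> 0" using proper_nz[OF pn] by auto
  have i4m: "is_path 4 ms" using path4[of 4 ms] nzm by simp
  have i4n: "is_path 4 ns" using path4[of 4 ns] nzn by simp
  have fm: "poly Dm 4 \<noteq> 0" "cfrac 4 ms = poly Nm 4 / poly Dm 4"
    using NDr_eval[of 4 ms] i4m unfolding Nm_def Dm_def by auto
  have fn: "poly Dn 4 \<noteq> 0" "cfrac 4 ns = poly Nn 4 / poly Dn 4"
    using NDr_eval[of 4 ns] i4n unfolding Nn_def Dn_def by auto
  have "poly P 4 = 0" using P0 by simp
  then have "poly Nm 4 * poly Dn 4 = poly Nn 4 * poly Dm 4" unfolding P_def by simp
  then have "poly Nm 4 / poly Dm 4 = poly Nn 4 / poly Dn 4" using fm(1) fn(1) by (simp add: frac_eq_eq)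
  then have "cfrac 4 ms = cfrac 4 ns" using fm fn by simp
  then show ?thesis using uniq4[of 4 ms ns] nzm nzn by simp
qed

theorem theorem2:
  fixes q :: real
  assumes "q > 0" and "\<not> algebraic q \<or> q \<ge> 4"
  shows "(\<forall>a::real. \<forall>ms ns. proper_path q ms \<and> proper_path q ns \<and> cfrac q ms = a \<and> cfrac q ns = a
            \<longrightarrow> ms = ns) \<and> weight_unique q"
proof -
  have U: "ms = ns" if "proper_path q ms" "proper_path q ns" "cfrac q ms = cfrac q ns" for ms ns
  proof (cases "q \<ge> 4")
    case True
    then show ?thesis using uniq4[OF True, of ms ns] proper_nz[OF that(1)] proper_nz[OF that(2)] that(3) by blast
  next
    case False
    then show ?thesis using assms uniq_trans that by blast
  qed
  have W: "weight_unique q"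
    unfolding weight_unique_def
  proof (intro allI impI)
    fix ms ns assume h: "is_path q ms \<and> is_path q ns \<and> cfrac q ms = cfrac q ns"
    obtain ms' where m': "proper_path q ms'" "cfrac q ms' = cfrac q ms" "weight q ms' = weight q ms"
      using reduce[OF assms(1)] h by blast
    obtain ns' where n': "proper_path q ns'" "cfrac q ns' = cfrac q ns" "weight q ns' = weight q ns"
      using reduce[OF assms(1)] h by blast
    have "ms' = ns'" using U m' n' h by simp
    then show "weight q ms = weight q ns" using m' n' by simp
  qed
  show ?thesis using U W by blast
qed

end
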